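(* Let $D$ be an Eulerian digraph (finite, without loops, parallel arcs or digons) which admits a simple dicycle intersection graph, i.e. $D$ has a cycle decomposition $\mathcal{F}(D)$ in which any two distinct dicycles share at most one vertex. Then every vertex of $D$ is a Seymour vertex: $|N^{+2}(v)|\geq |N^{+}(v)|$ for all $v\in V(D)$, i.e. $SV(D)=V(D)$.
   Context: All digraphs are finite, with no loops, no parallel arcs and no digons (a digon is a pair of arcs $u\to w$, $w\to u$); in particular every dicycle has length at least $3$. For a vertex $v$, $N^{+}(v)$ is the set of out-neighbours of $v$, and $N^{+2}(v)$ is the second out-neighbourhood: the set of vertices $w\notin N^{+}(v)\cup\{v\}$ such that $u\to w$ is an arc for some $u\in N^{+}(v)$ (vertices at directed distance exactly $2$ from $v$). A vertex $v$ with $|N^{+2}(v)|\ge |N^{+}(v)|$ is a Seymour vertex, and $SV(D)$ denotes the set of Seymour vertices of $D$. An Eulerian digraph is a (weakly) connected digraph having a closed directed trail using every arc exactly once; equivalently a connected digraph with $d^{+}(v)=d^{-}(v)$ for all $v$. A cycle decomposition $\mathcal{F}(D)$ is a set of dicycles of $D$ whose arc sets partition $A(D)$. The dicycle intersection graph $CI(D)$ associated with $\mathcal{F}(D)$ is the multigraph with vertex set $\mathcal{F}(D)$ having, for each pair of distinct dicycles $C,C'\in\mathcal{F}(D)$ and each vertex of $D$ lying on both $C$ and $C'$, one edge between $C$ and $C'$. $D$ admits a simple dicycle intersection graph if for some cycle decomposition this multigraph has no parallel edges. *)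

theory Defs
  imports Main
begin

text \<open>A digraph is given by a vertex set V and an arc set A (a set of ordered
pairs, so parallel arcs are impossible).\<close>

definition digraph :: "'a set \<Rightarrow> ('a \<times> 'a) set \<Rightarrow> bool" where
  "digraph V A \<longleftrightarrow> finite V \<and> A \<subseteq> V \<times> V
     \<and> (\<forall>v. (v, v) \<notin> A)
     \<and> (\<forall>u w. (u, w) \<in> A \<longrightarrow> (w, u) \<notin> A)"

definition out_nbrs :: "('a \<times> 'a) set \<Rightarrow> 'a \<Rightarrow> 'a set" where
  "out_nbrs A v = {w. (v, w) \<in> A}"

definition second_out_nbrs :: "('a \<times> 'a) set \<Rightarrow> 'a \<Rightarrow> 'a set" where
  "second_out_nbrs A v =
     {w. w \<notin> out_nbrs A v \<and> w \<noteq> v \<and> (\<exists>u \<in> out_nbrs A v. (u, w) \<in> A)}"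

definition seymour_vertex :: "('a \<times> 'a) set \<Rightarrow> 'a \<Rightarrow> bool" where
  "seymour_vertex A v \<longleftrightarrow> card (second_out_nbrs A v) \<ge> card (out_nbrs A v)"

definition weakly_connected :: "'a set \<Rightarrow> ('a \<times> 'a) set \<Rightarrow> bool" where
  "weakly_connected V A \<longleftrightarrow> (\<forall>u \<in> V. \<forall>v \<in> V. (u, v) \<in> (A \<union> A\<inverse>)\<^sup>*)"

definition closed_euler_trail :: "('a \<times> 'a) set \<Rightarrow> ('a \<times> 'a) list \<Rightarrow> bool" where
  "closed_euler_trail A es \<longleftrightarrow> distinct es \<and> set es = A
     \<and> (\<forall>i < length es. snd (es ! i) = fst (es ! ((i + 1) mod length es)))"

definition eulerian :: "'a set \<Rightarrow> ('a \<times> 'a) set \<Rightarrow> bool" where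
  "eulerian V A \<longleftrightarrow> digraph V A \<and> weakly_connected V A \<and> (\<exists>es. closed_euler_trail A es)"

definition cycle_arcs :: "'a list \<Rightarrow> ('a \<times> 'a) set" where
  "cycle_arcs cs = {(cs ! i, cs ! ((i + 1) mod length cs)) | i. i < length cs}"

definition dicycle :: "('a \<times> 'a) set \<Rightarrow> ('a \<times> 'a) set \<Rightarrow> bool" where
  "dicycle A C \<longleftrightarrow> (\<exists>cs. distinct cs \<and> length cs \<ge> 3 \<and> C = cycle_arcs cs \<and> C \<subseteq> A)"

definition cycle_verts :: "('a \<times> 'a) set \<Rightarrow> 'a set" where
  "cycle_verts C = fst ` C"

definition cycle_decomposition :: "('a \<times> 'a) set \<Rightarrow> ('a \<times> 'a) set set \<Rightarrow> bool" where
  "cycle_decomposition A F \<longleftrightarrow> (\<forall>C \<in> F. dicycle A C) \<and> \<Union>F = A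
     \<and> (\<forall>C \<in> F. \<forall>C' \<in> F. C \<noteq> C' \<longrightarrow> C \<inter> C' = {})"

text \<open>The dicycle intersection graph has one edge between C and C' per common
vertex; it is simple iff distinct dicycles share at most one vertex.\<close>
definition simple_intersection :: "('a \<times> 'a) set set \<Rightarrow> bool" where
  "simple_intersection F \<longleftrightarrow>
     (\<forall>C \<in> F. \<forall>C' \<in> F. C \<noteq> C' \<longrightarrow> card (cycle_verts C \<inter> cycle_verts C') \<le> 1)"

definition admits_simple_CI :: "('a \<times> 'a) set \<Rightarrow> bool" where
  "admits_simple_CI A \<longleftrightarrow> (\<exists>F. cycle_decomposition A F \<and> simple_intersection F)"

end

theory Submission
  imports Defs
begin

lemma dicycle_succ_unique:
  assumes "dicycle A C" "(a,b) \<in> C" "(a,c) \<in> C" shows "b = c"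
proof -
  obtain cs where cs: "distinct cs" "length cs \<ge> 3" "C = cycle_arcs cs" using assms(1) unfolding dicycle_def by blast
  obtain i where i: "i < length cs" "a = cs ! i" "b = cs ! ((i+1) mod length cs)"
    using assms(2) cs(3) unfolding cycle_arcs_def by auto
  obtain j where j: "j < length cs" "a = cs ! j" "c = cs ! ((j+1) mod length cs)"
    using assms(3) cs(3) unfolding cycle_arcs_def by auto
  have "i = j" using i j cs(1) nth_eq_iff_index_eq by metis
  thus ?thesis using i j by simp
qed

lemma dicycle_verts:
  assumes "dicycle A C" "(a,b) \<in> C" shows "a \<in> cycle_verts C" "b \<in> cycle_verts C"
proof -
  show "a \<in> cycle_verts C" using assms(2) unfolding cycle_verts_def by force
  obtain cs where cs: "distinct cs" "length cs \<ge> 3" "C = cycle_arcs cs" using assms(1) unfolding dicycle_def by blast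
  obtain i where i: "i < length cs" "a = cs ! i" "b = cs ! ((i+1) mod length cs)"
    using assms(2) cs(3) unfolding cycle_arcs_def by auto
  let ?k = "(i+1) mod length cs"
  have "?k < length cs" using cs(2) by (intro mod_less_divisor) linarith
  hence "(cs ! ?k, cs ! ((?k+1) mod length cs)) \<in> C" using cs(3) unfolding cycle_arcs_def by blast
  thus "b \<in> cycle_verts C" using i unfolding cycle_verts_def by force
qed

lemma dicycle_next:
  assumes "dicycle A C" "(v,w) \<in> C" shows "\<exists>x. (w,x) \<in> C \<and> x \<noteq> v"
proof -
  obtain cs where cs: "distinct cs" "length cs \<ge> 3" "C = cycle_arcs cs" using assms(1) unfolding dicycle_def by blast
  obtain i where i: "i < length cs" "v = cs ! i" "w = cs ! ((i+1) mod length cs)"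
    using assms(2) cs(3) unfolding cycle_arcs_def by auto
  let ?n = "length cs"
  let ?k = "(i+1) mod ?n"
  have k: "?k < ?n" using cs(2) by (intro mod_less_divisor) linarith
  have in1: "(cs ! ?k, cs ! ((?k+1) mod ?n)) \<in> C" using cs(3) k unfolding cycle_arcs_def by blast
  have "(?k+1) mod ?n = (i+2) mod ?n" by (simp add: mod_Suc_eq)
  moreover have "(i+2) mod ?n \<noteq> i"
  proof
    assume h: "(i+2) mod ?n = i"
    have "(i+2) mod ?n = (if i + 2 < ?n then i+2 else i + 2 - ?n)"
      using i(1) cs(2) by (simp add: mod_if le_mod_geq)
    thus False using h i(1) cs(2) by (auto split: if_splits)
  qed
  moreover have "(i+2) mod ?n < ?n" using cs(2) by (intro mod_less_divisor) linarith
  ultimately have "cs ! ((?k+1) mod ?n) \<noteq> v" using i cs(1) nth_eq_iff_index_eq by metis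
  thus ?thesis using in1 i by metis
qed

theorem theorem2p1:
  fixes V :: "'a set" and A :: "('a \<times> 'a) set"
  assumes "eulerian V A"
    and "admits_simple_CI A"
  shows "\<forall>v \<in> V. seymour_vertex A v"
proof
  fix v assume "v \<in> V"
  have dg: "digraph V A" using assms(1) unfolding eulerian_def by blast
  have finA: "finite A" using dg unfolding digraph_def by (meson finite_SigmaI finite_subset)
  obtain F where F: "cycle_decomposition A F" "simple_intersection F"
    using assms(2) unfolding admits_simple_CI_def by blast
  have dic: "\<And>C. C \<in> F \<Longrightarrow> dicycle A C" using F(1) unfolding cycle_decomposition_def by blast
  have sub: "\<And>C. C \<in> F \<Longrightarrow> C \<subseteq> A" using F(1) unfolding cycle_decomposition_def by blast
  have cov: "\<And>e. e \<in> A \<Longrightarrow> \<exists>C\<in>F. e \<in> C" using F(1) unfolding cycle_decomposition_def by blast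
  have noloop: "\<And>a. (a,a) \<notin> A" using dg unfolding digraph_def by blast
  have two: False if "C \<in> F" "C' \<in> F" "C \<noteq> C'" "a \<in> cycle_verts C" "a \<in> cycle_verts C'"
      "b \<in> cycle_verts C" "b \<in> cycle_verts C'" "a \<noteq> b" for C C' a b
  proof -
    have "finite C" using sub[OF that(1)] finA finite_subset by blast
    hence fin: "finite (cycle_verts C \<inter> cycle_verts C')" unfolding cycle_verts_def by simp
    have "{a,b} \<subseteq> cycle_verts C \<inter> cycle_verts C'" using that by blast
    hence "card {a,b} \<le> card (cycle_verts C \<inter> cycle_verts C')" using fin card_mono by blast
    moreover have "card (cycle_verts C \<inter> cycle_verts C') \<le> 1"
      using F(2) that(1-3) unfolding simple_intersection_def by blast
    ultimately show False using that(8) by simp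
  qed
  define P where "P w x \<longleftrightarrow> (\<exists>C\<in>F. (v,w) \<in> C \<and> (w,x) \<in> C \<and> x \<noteq> v)" for w x
  define f where "f w = (SOME x. P w x)" for w
  have Pf: "P w (f w)" if "w \<in> out_nbrs A v" for w
  proof -
    have "(v,w) \<in> A" using that unfolding out_nbrs_def by blast
    then obtain C where C: "C \<in> F" "(v,w) \<in> C" using cov by blast
    then obtain x where "(w,x) \<in> C" "x \<noteq> v" using dicycle_next dic by metis
    hence "P w x" using C unfolding P_def by blast
    thus ?thesis unfolding f_def by (rule someI)
  qed
  have into: "f ` out_nbrs A v \<subseteq> second_out_nbrs A v"
  proof
    fix y assume "y \<in> f ` out_nbrs A v"
    then obtain w where w: "w \<in> out_nbrs A v" "y = f w" by blast
    then obtain C where C: "C \<in> F" "(v,w) \<in> C" "(w,y) \<in> C" "y \<noteq> v" using Pf unfolding P_def by blast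
    have wy: "w \<noteq> y" using C sub noloop by blast
    have "(v,y) \<notin> A"
    proof
      assume "(v,y) \<in> A"
      then obtain C' where C': "C' \<in> F" "(v,y) \<in> C'" using cov by blast
      show False
      proof (cases "C' = C")
        case True thus False using dicycle_succ_unique[OF dic[OF C(1)] C(2)] C' wy by blast
      next
        case False
        show False using two[OF C(1) C'(1) False[symmetric]]
            dicycle_verts[OF dic[OF C(1)] C(2)] dicycle_verts[OF dic[OF C(1)] C(3)]
            dicycle_verts[OF dic[OF C'(1)] C'(2)] C(4) by metis
      qed
    qed
    moreover have "(w,y) \<in> A" using C sub by blast
    ultimately show "y \<in> second_out_nbrs A v" using w C unfolding second_out_nbrs_def out_nbrs_def by blast
  qed
  have inj: "inj_on f (out_nbrs A v)"
  proof
    fix w1 w2 assume w: "w1 \<in> out_nbrs A v" "w2 \<in> out_nbrs A v" "f w1 = f w2"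
    obtain C1 where C1: "C1 \<in> F" "(v,w1) \<in> C1" "(w1,f w1) \<in> C1" "f w1 \<noteq> v" using Pf[OF w(1)] unfolding P_def by blast
    obtain C2 where C2: "C2 \<in> F" "(v,w2) \<in> C2" "(w2,f w2) \<in> C2" "f w2 \<noteq> v" using Pf[OF w(2)] unfolding P_def by blast
    show "w1 = w2"
    proof (cases "C1 = C2")
      case True thus ?thesis using dicycle_succ_unique[OF dic[OF C1(1)] C1(2)] C2 by blast
    next
      case False
      show ?thesis using two[OF C1(1) C2(1) False]
          dicycle_verts[OF dic[OF C1(1)] C1(2)] dicycle_verts[OF dic[OF C1(1)] C1(3)]
          dicycle_verts[OF dic[OF C2(1)] C2(2)] dicycle_verts[OF dic[OF C2(1)] C2(3)] C1(4) w(3) by metis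
    qed
  qed
  have fin2: "finite (second_out_nbrs A v)"
  proof -
    have "second_out_nbrs A v \<subseteq> snd ` A" unfolding second_out_nbrs_def out_nbrs_def by force
    thus ?thesis using finA finite_subset by blast
  qed
  show "seymour_vertex A v" unfolding seymour_vertex_def
    using card_inj_on_le[OF inj into fin2] .
qed

end
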